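(* Let $F$ be any finite set of points with rational coordinates lying on the unit circle $x^2+y^2=1$ (for instance, $100$ such points), and consider the configuration consisting of the points of $F$ and the line $y=x$ (the circle itself is not part of the configuration). Then the two intersection points $\pm\left(\frac{\sqrt2}{2},\frac{\sqrt2}{2}\right)$ of the line $y=x$ with the unit circle are non-constructible by a straightedge from this configuration.
   Context: A configuration is a finite collection of points $a_i\in\mathbb R^2$, lines $\ell_i\subset\mathbb R^2$ and curves $\gamma_i\subset\mathbb R^2$. Given a configuration $\{a_i,\ell_i,\gamma_i\}$, call a set $\Sigma\subset\mathbb R^2$ admissible if: (1) $\Sigma$ is dense in $\mathbb R^2$; (2) every $a_i$ lies in $\Sigma$; (3) for any $b_1,b_2,b_3,b_4\in\Sigma$ with $b_1\neq b_2$, $b_3\ne b_4$, if the lines $b_1b_2$ and $b_3b_4$ are distinct and not parallel, then their intersection point lies in $\Sigma$; (4) for any distinct $b_1,b_2\in\Sigma$, every isolated intersection point of the line $b_1b_2$ with any of the lines $\ell_i$ or curves $\gamma_j$ lies in $\Sigma$. A point $a$ is non-constructible (by a straightedge) from the configuration if there exists an admissible set $\Sigma$ with $a\notin\Sigma$. *)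

theory Defs
  imports "HOL-Analysis.Analysis"
begin

type_synonym pt = "real \<times> real"

definition line_through :: "pt \<Rightarrow> pt \<Rightarrow> pt set" where
  "line_through b1 b2 = {p. \<exists>t::real. p = b1 + t *\<^sub>R (b2 - b1)}"

definition parallel_dir :: "pt \<Rightarrow> pt \<Rightarrow> bool" where
  "parallel_dir u v \<longleftrightarrow> fst u * snd v - snd u * fst v = 0"

definition isolated_pt :: "pt \<Rightarrow> pt set \<Rightarrow> bool" where
  "isolated_pt p S \<longleftrightarrow> p \<in> S \<and> (\<exists>e>0. \<forall>q\<in>S. dist q p < e \<longrightarrow> q = p)"

text \<open>Admissible sets for a configuration given by a set of points A, a set of lines L
  and a set of curves C (each line / curve being a subset of the plane).\<close>
definition admissible :: "pt set \<Rightarrow> pt set set \<Rightarrow> pt set set \<Rightarrow> pt set \<Rightarrow> bool" where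
  "admissible A L C \<Sigma> \<longleftrightarrow>
     closure \<Sigma> = UNIV \<and>
     A \<subseteq> \<Sigma> \<and>
     (\<forall>b1\<in>\<Sigma>. \<forall>b2\<in>\<Sigma>. \<forall>b3\<in>\<Sigma>. \<forall>b4\<in>\<Sigma>.
        b1 \<noteq> b2 \<and> b3 \<noteq> b4 \<and> line_through b1 b2 \<noteq> line_through b3 b4
        \<and> \<not> parallel_dir (b2 - b1) (b4 - b3) \<longrightarrow>
        line_through b1 b2 \<inter> line_through b3 b4 \<subseteq> \<Sigma>) \<and>
     (\<forall>b1\<in>\<Sigma>. \<forall>b2\<in>\<Sigma>. b1 \<noteq> b2 \<longrightarrow>
        (\<forall>X \<in> L \<union> C. \<forall>p. isolated_pt p (line_through b1 b2 \<inter> X) \<longrightarrow> p \<in> \<Sigma>))"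

definition non_constructible :: "pt set \<Rightarrow> pt set set \<Rightarrow> pt set set \<Rightarrow> pt \<Rightarrow> bool" where
  "non_constructible A L C a \<longleftrightarrow> (\<exists>\<Sigma>. admissible A L C \<Sigma> \<and> a \<notin> \<Sigma>)"

end

theory Submission
  imports Defs
begin

lemma sqrt2_irrat: "sqrt 2 \<notin> \<rat>"
proof
  assume "sqrt 2 \<in> \<rat>"
  then obtain m n :: nat where n: "n \<noteq> 0" and sq: "\<bar>sqrt 2\<bar> = m / n" and cop: "coprime m n"
    by (rule Rats_abs_nat_div_natE)
  have "real m = sqrt 2 * n" using n sq by (simp add: field_simps)
  then have "real (m^2) = real (2 * n^2)" by (simp add: power_mult_distrib)
  then have eq: "m^2 = 2 * n^2" by (simp only: of_nat_eq_iff)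
  have "even (m^2)" using eq by simp
  then have "even m" by simp
  then obtain k where "m = 2 * k" ..
  with eq have "n^2 = 2 * k^2" by (simp add: power2_eq_square)
  then have "even (n^2)" by simp
  then have "even n" by simp
  have "is_unit (2::nat)" using coprime_common_divisor[OF cop \<open>even m\<close> \<open>even n\<close>] .
  then show False by simp
qed

definition RR :: "pt set" where "RR = {p. fst p \<in> \<rat> \<and> snd p \<in> \<rat>}"

lemma RR_closure: "closure RR = UNIV"
proof -
  have "RR = \<rat> \<times> \<rat>" unfolding RR_def by auto
  then show ?thesis by (metis closure_Times Rats_closure_real UNIV_Times_UNIV)
qed

lemma line_mem: "p \<in> line_through b1 b2 \<longleftrightarrow> (\<exists>t. fst p = fst b1 + t * (fst b2 - fst b1) \<and> snd p = snd b1 + t * (snd b2 - snd b1))"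
  unfolding line_through_def by (auto simp: prod_eq_iff)

lemma inter_rat:
  assumes b: "b1 \<in> RR" "b2 \<in> RR" "b3 \<in> RR" "b4 \<in> RR"
    and np: "\<not> parallel_dir (b2 - b1) (b4 - b3)"
    and p: "p \<in> line_through b1 b2" "p \<in> line_through b3 b4"
  shows "p \<in> RR"
proof -
  obtain x1 y1 x2 y2 x3 y3 x4 y4 where bs: "b1 = (x1,y1)" "b2 = (x2,y2)" "b3 = (x3,y3)" "b4 = (x4,y4)"
    by (metis prod.exhaust)
  obtain x y where pp: "p = (x,y)" by (metis prod.exhaust)
  have r: "x1 \<in> \<rat>" "y1 \<in> \<rat>" "x2 \<in> \<rat>" "y2 \<in> \<rat>" "x3 \<in> \<rat>" "y3 \<in> \<rat>" "x4 \<in> \<rat>" "y4 \<in> \<rat>"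
    using b bs unfolding RR_def by auto
  obtain t where t: "x = x1 + t * (x2 - x1)" "y = y1 + t * (y2 - y1)"
    using p(1) pp bs line_mem by auto
  obtain s where s: "x = x3 + s * (x4 - x3)" "y = y3 + s * (y4 - y3)"
    using p(2) pp bs line_mem by auto
  define D where "D = (x2 - x1) * (y4 - y3) - (y2 - y1) * (x4 - x3)"
  have D: "D \<noteq> 0" using np bs unfolding parallel_dir_def D_def by simp
  have "t * D = (x3 - x1) * (y4 - y3) - (y3 - y1) * (x4 - x3)"
  proof -
    have e1: "t * (x2 - x1) = (x3 - x1) + s * (x4 - x3)" using t s by linarith
    have e2: "t * (y2 - y1) = (y3 - y1) + s * (y4 - y3)" using t s by linarith
    have "t * D = (t * (x2 - x1)) * (y4 - y3) - (t * (y2 - y1)) * (x4 - x3)"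
      unfolding D_def by (simp add: algebra_simps)
    also have "\<dots> = ((x3 - x1) + s * (x4 - x3)) * (y4 - y3) - ((y3 - y1) + s * (y4 - y3)) * (x4 - x3)"
      using e1 e2 by simp
    also have "\<dots> = (x3 - x1) * (y4 - y3) - (y3 - y1) * (x4 - x3)" by (simp add: algebra_simps)
    finally show ?thesis .
  qed
  then have "t = ((x3 - x1) * (y4 - y3) - (y3 - y1) * (x4 - x3)) / D" using D by (simp add: field_simps)
  moreover have "D \<in> \<rat>" unfolding D_def using r by simp
  ultimately have "t \<in> \<rat>" using r by simp
  then show ?thesis using t r pp unfolding RR_def by simp
qed

lemma diag_rat:
  assumes b: "b1 \<in> RR" "b2 \<in> RR" "b1 \<noteq> b2"
    and iso: "isolated_pt p (line_through b1 b2 \<inter> {p. snd p = fst p})"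
  shows "p \<in> RR"
proof -
  obtain x1 y1 x2 y2 where bs: "b1 = (x1,y1)" "b2 = (x2,y2)" by (metis prod.exhaust)
  have r: "x1 \<in> \<rat>" "y1 \<in> \<rat>" "x2 \<in> \<rat>" "y2 \<in> \<rat>" using b bs unfolding RR_def by auto
  from iso have pin: "p \<in> line_through b1 b2" "snd p = fst p"
    and e: "\<exists>e>0. \<forall>q\<in>line_through b1 b2 \<inter> {p. snd p = fst p}. dist q p < e \<longrightarrow> q = p"
    unfolding isolated_pt_def by auto
  obtain t where t: "p = b1 + t *\<^sub>R (b2 - b1)" using pin unfolding line_through_def by auto
  have tt: "y1 + t * (y2 - y1) = x1 + t * (x2 - x1)" using t pin(2) bs by simp
  show ?thesis
  proof (cases "y2 - y1 = x2 - x1")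
    case False
    have "t * ((y2 - y1) - (x2 - x1)) = x1 - y1" using tt by (simp add: algebra_simps)
    then have "t = (x1 - y1) / ((y2 - y1) - (x2 - x1))" using False by (simp add: field_simps)
    then have "t \<in> \<rat>" using r by simp
    then show ?thesis using t r bs unfolding RR_def by simp
  next
    case True
    then have xy: "x1 = y1" using tt by simp
    obtain e where e0: "e > 0" and eq: "\<forall>q\<in>line_through b1 b2 \<inter> {p. snd p = fst p}. dist q p < e \<longrightarrow> q = p"
      using e by auto
    define d where "d = b2 - b1"
    have dn: "norm d > 0" using b(3) d_def by simp
    define q where "q = b1 + (t + e / (2 * norm d)) *\<^sub>R d"
    have "q \<in> line_through b1 b2" unfolding q_def d_def line_through_def by blast
    moreover have "snd q = fst q" unfolding q_def d_def using bs True xy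
      by (simp add: algebra_simps)
    moreover have qp: "q - p = (e / (2 * norm d)) *\<^sub>R d" unfolding q_def t d_def by (simp add: algebra_simps)
    then have "dist q p = e / 2" using dn e0 by (simp add: dist_norm)
    ultimately have "q = p" using eq e0 by auto
    then have "(e / (2 * norm d)) *\<^sub>R d = 0" using qp by simp
    then show ?thesis using dn e0 by simp
  qed
qed

lemma RR_adm:
  assumes "\<forall>p\<in>F. fst p \<in> \<rat> \<and> snd p \<in> \<rat> \<and> (fst p)\<^sup>2 + (snd p)\<^sup>2 = 1"
  shows "admissible F {{p. snd p = fst p}} {} RR"
proof -
  have c1: "F \<subseteq> RR" using assms unfolding RR_def by auto
  have c2: "\<forall>b1\<in>RR. \<forall>b2\<in>RR. \<forall>b3\<in>RR. \<forall>b4\<in>RR.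
        b1 \<noteq> b2 \<and> b3 \<noteq> b4 \<and> line_through b1 b2 \<noteq> line_through b3 b4
        \<and> \<not> parallel_dir (b2 - b1) (b4 - b3) \<longrightarrow>
        line_through b1 b2 \<inter> line_through b3 b4 \<subseteq> RR"
  proof (intro ballI impI subsetI)
    fix b1 b2 b3 b4 p assume h: "b1 \<in> RR" "b2 \<in> RR" "b3 \<in> RR" "b4 \<in> RR"
      "b1 \<noteq> b2 \<and> b3 \<noteq> b4 \<and> line_through b1 b2 \<noteq> line_through b3 b4
        \<and> \<not> parallel_dir (b2 - b1) (b4 - b3)" "p \<in> line_through b1 b2 \<inter> line_through b3 b4"
    have np: "\<not> parallel_dir (b2 - b1) (b4 - b3)" using h(5) by blast
    have pl: "p \<in> line_through b1 b2" "p \<in> line_through b3 b4" using h(6) by auto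
    show "p \<in> RR" by (rule inter_rat[OF h(1) h(2) h(3) h(4) np pl])
  qed
  have c3: "\<forall>b1\<in>RR. \<forall>b2\<in>RR. b1 \<noteq> b2 \<longrightarrow>
        (\<forall>X \<in> {{p. snd p = fst p}} \<union> {}. \<forall>p. isolated_pt p (line_through b1 b2 \<inter> X) \<longrightarrow> p \<in> RR)"
  proof (intro ballI impI allI)
    fix b1 b2 X p assume h: "b1 \<in> RR" "b2 \<in> RR" "b1 \<noteq> b2" "X \<in> {{p. snd p = fst p}} \<union> {}"
      "isolated_pt p (line_through b1 b2 \<inter> X)"
    have "X = {p. snd p = fst p}" using h(4) by simp
    then show "p \<in> RR" using diag_rat[OF h(1) h(2) h(3)] h(5) by simp
  qed
  show ?thesis unfolding admissible_def using RR_closure c1 c2 c3 by blast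
qed

theorem mainTheorem8:
  fixes F :: "(real \<times> real) set"
  assumes "finite F"
    and "\<forall>p\<in>F. fst p \<in> \<rat> \<and> snd p \<in> \<rat> \<and> (fst p)\<^sup>2 + (snd p)\<^sup>2 = 1"
  shows "non_constructible F {{p. snd p = fst p}} {} (sqrt 2 / 2, sqrt 2 / 2)
       \<and> non_constructible F {{p. snd p = fst p}} {} (- (sqrt 2 / 2), - (sqrt 2 / 2))"
proof -
  have n1: "sqrt 2 / 2 \<notin> \<rat>"
  proof
    assume "sqrt 2 / 2 \<in> \<rat>"
    then have "2 * (sqrt 2 / 2) \<in> \<rat>" by (intro Rats_mult) auto
    then show False using sqrt2_irrat by simp
  qed
  have n2: "- (sqrt 2 / 2) \<notin> \<rat>" using n1 by (metis Rats_minus_iff)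
  show ?thesis unfolding non_constructible_def using RR_adm[OF assms(2)] n1 n2
    unfolding RR_def by auto
qed

end
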